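(* Let $X=(X_i)_{1\le i\le n}$ and $Y=(Y_i)_{1\le i\le n}$ be independent, each with i.i.d. letters in a finite alphabet $\{\alpha_1,\dots,\alpha_m\}$ with $\mathbb{P}(X_1=\alpha_k)=\mathbb{P}(Y_1=\alpha_k)=p_k$, and let $LC_n$ be the length of the longest common subsequence of $X_1\cdots X_n$ and $Y_1\cdots Y_n$. Then for every $r\ge2$, \[ \mathbb{E}|LC_n-\mathbb{E}LC_n|^r\le\frac{(r-1)^r}{2}\left(1-\sum_{k=1}^mp_k^2\right)(2n)^{r/2}, \] and for every $0<r\le2$, \[ \mathbb{E}|LC_n-\mathbb{E}LC_n|^r\le\left(\left(1-\sum_{k=1}^mp_k^2\right)n\right)^{r/2}. \]
   Context: $LC_n$ is the largest $k$ such that there exist $1\le i_1<\dots<i_k\le n$ and $1\le j_1<\dots<j_k\le n$ with $X_{i_s}=Y_{j_s}$ for $s=1,\dots,k$. *)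

theory Defs
  imports "HOL-Probability.Probability"
begin

text \<open>Words of length n are functions on the index set {1..n}.\<close>

definition LC :: "nat \<Rightarrow> (nat \<Rightarrow> 'a) \<Rightarrow> (nat \<Rightarrow> 'a) \<Rightarrow> nat" where
  "LC n x y = Max {k. \<exists>i j :: nat \<Rightarrow> nat.
      (\<forall>s\<in>{1..k}. 1 \<le> i s \<and> i s \<le> n \<and> 1 \<le> j s \<and> j s \<le> n \<and> x (i s) = y (j s)) \<and>
      (\<forall>s\<in>{1..<k}. i s < i (Suc s) \<and> j s < j (Suc s))}"

definition word_pair_pmf :: "nat \<Rightarrow> 'a pmf \<Rightarrow> ((nat \<Rightarrow> 'a) \<times> (nat \<Rightarrow> 'a)) pmf" where
  "word_pair_pmf n p = pair_pmf (Pi_pmf {1..n} undefined (\<lambda>_. p)) (Pi_pmf {1..n} undefined (\<lambda>_. p))"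

end

theory Submission
  imports Defs
begin


lemma powr_tangent:
  fixes c u p :: real
  assumes c: "c > 0" and u: "u \<ge> 0" and p: "p \<ge> 1"
  shows "c powr p + p * c powr (p - 1) * (u - c) \<le> u powr p"
proof (cases "u = 0")
  case True
  have "c powr p = c powr (p - 1) * c" using c by (simp add: powr_diff)
  then have "c powr p + p * c powr (p - 1) * (u - c) = (1 - p) * c powr p"
    using True by (simp add: algebra_simps)
  also have "\<dots> \<le> 0" using p by (simp add: mult_nonpos_nonneg)
  finally show ?thesis using True by simp
next
  case False
  have "p * c powr (p - 1) * (u - c) \<le> u powr p - c powr p"
  proof (rule f''_imp_f'[where C="{0<..}" and f="\<lambda>x. x powr p" and f'="\<lambda>x. p * x powr (p - 1)"
          and f''="\<lambda>x. p * ((p - 1) * x powr (p - 1 - 1))"])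
    show "convex ({0<..}::real set)" by simp
    fix x :: real assume "x \<in> {0<..}"
    then have x: "x > 0" by simp
    show "((\<lambda>x. x powr p) has_real_derivative p * x powr (p - 1)) (at x)"
      using has_real_derivative_powr[OF x] .
    show "((\<lambda>x. p * x powr (p - 1)) has_real_derivative p * ((p - 1) * x powr (p - 1 - 1))) (at x)"
      by (intro DERIV_cmult has_real_derivative_powr x)
    show "0 \<le> p * ((p - 1) * x powr (p - 1 - 1))" using p by simp
  qed (use c u False in auto)
  then show ?thesis by simp
qed

lemma ln_ineq_aux:
  fixes r :: real assumes r: "r \<ge> 2"
  shows "r powr (r - 2) \<le> (r - 1) powr (r - 1)"
proof -
  define t where "t = r - 1"
  have t: "t \<ge> 1" using r t_def by simp
  have l1: "ln (t + 1) \<le> ln t + 1 / t"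
  proof -
    have "1 + 1 / t = (t + 1) / t" using t by (simp add: field_simps)
    then have "ln (1 + 1 / t) = ln (t + 1) - ln t" using t by (simp add: ln_div)
    then have "ln (t + 1) = ln t + ln (1 + 1 / t)" by simp
    also have "ln (1 + 1/t) \<le> 1 / t" using t by (intro ln_add_one_self_le_self) simp
    finally show ?thesis by simp
  qed
  have l2: "1 - 1 / t \<le> ln t"
  proof -
    have "ln (1 / t) \<le> 1 / t - 1" using t by (intro ln_le_minus_one) simp
    then show ?thesis using t by (simp add: ln_div)
  qed
  have "(t - 1) * ln (t + 1) \<le> (t - 1) * (ln t + 1 / t)"
    using l1 t by (intro mult_left_mono) auto
  also have "\<dots> = (t - 1) * ln t + (1 - 1 / t)" using t by (simp add: field_simps)
  also have "\<dots> \<le> (t - 1) * ln t + ln t" using l2 by simp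
  also have "\<dots> = t * ln t" by (simp add: algebra_simps)
  finally have "(r - 2) * ln r \<le> (r - 1) * ln (r - 1)" unfolding t_def by simp
  then have "exp ((r - 2) * ln r) \<le> exp ((r - 1) * ln (r - 1))" by simp
  then show ?thesis using r by (simp add: powr_def)
qed

lemma deriv_abs_powr:
  fixes r t :: real assumes r: "r > 1"
  shows "DERIV (\<lambda>x. \<bar>x\<bar> powr r) t :> r * (t * \<bar>t\<bar> powr (r - 2))"
proof -
  consider "t > 0" | "t < 0" | "t = 0" by linarith
  then show ?thesis
  proof cases
    case 1
    have ev: "eventually (\<lambda>x. \<bar>x\<bar> powr r = x powr r) (nhds t)"
      using eventually_nhds_in_open[of "{0<..}" t] 1
      by (auto elim!: eventually_mono)
    have "DERIV (\<lambda>x. x powr r) t :> r * t powr (r - 1)"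
      using has_real_derivative_powr[OF 1] .
    moreover have "t powr (r - 1) = t * \<bar>t\<bar> powr (r - 2)"
      using 1 by (simp add: powr_diff field_simps power2_eq_square)
    ultimately show ?thesis
      by (subst DERIV_cong_ev[OF refl ev refl]) simp
  next
    case 2
    have ev: "eventually (\<lambda>x. \<bar>x\<bar> powr r = (- x) powr r) (nhds t)"
      using eventually_nhds_in_open[of "{..<0}" t] 2
      by (auto elim!: eventually_mono)
    have "DERIV (\<lambda>x. (- x) powr r) t :> r * (- t) powr (r - 1) * (- 1)"
      using 2 by (intro DERIV_chain2[OF has_real_derivative_powr]) (auto intro!: derivative_eq_intros)
    moreover have "r * (- t) powr (r - 1) * (- 1) = r * (t * \<bar>t\<bar> powr (r - 2))"
      using 2 by (simp add: powr_diff field_simps power2_eq_square)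
    ultimately show ?thesis
      by (subst DERIV_cong_ev[OF refl ev refl]) simp
  next
    case 3
    have "((\<lambda>h. (\<bar>0 + h\<bar> powr r - \<bar>0\<bar> powr r) / h) \<longlongrightarrow> 0) (at 0)"
    proof (rule Lim_null_comparison)
      show "\<forall>\<^sub>F h in at 0. norm ((\<bar>0 + h\<bar> powr r - \<bar>0\<bar> powr r) / h) \<le> \<bar>h\<bar> powr (r - 1)"
      proof (rule always_eventually, rule allI)
        fix h :: real
        show "norm ((\<bar>0 + h\<bar> powr r - \<bar>0\<bar> powr r) / h) \<le> \<bar>h\<bar> powr (r - 1)"
        proof (cases "h = 0")
          case False
          then show ?thesis by (simp add: powr_diff abs_divide)
        qed simp
      qed
      show "((\<lambda>h. \<bar>h\<bar> powr (r - 1)) \<longlongrightarrow> 0) (at 0)"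
        using r by (intro tendsto_zero_powrI tendsto_rabs_zero tendsto_ident_at tendsto_const) auto
    qed
    then show ?thesis using 3 by (simp add: DERIV_def)
  qed
qed

lemma powr_lip_aux:
  fixes r s t R :: real
  assumes r: "r \<ge> 2" and st: "0 \<le> s" "s \<le> t" "t \<le> R"
  shows "t powr (r - 1) - s powr (r - 1) \<le> (r - 1) * R powr (r - 2) * (t - s)"
proof -
  consider "s = 0" | "s > 0 \<and> s < t" | "s = t" using st by linarith
  then show ?thesis
  proof cases
    case 1
    have "t powr (r - 1) = t * t powr (r - 2)"
    proof (cases "t = 0")
      case False then show ?thesis using st by (simp add: powr_diff field_simps power2_eq_square)
    qed simp
    also have "\<dots> \<le> t * R powr (r - 2)"
      using st r 1 by (intro mult_left_mono powr_mono2) auto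
    also have "\<dots> = 1 * (R powr (r - 2) * t)" by simp
    also have "\<dots> \<le> (r - 1) * (R powr (r - 2) * t)"
      using r st 1 by (intro mult_right_mono) auto
    finally show ?thesis using 1 by (simp add: algebra_simps)
  next
    case 2
    then have "s < t" by simp
    have der: "\<And>x. s \<le> x \<Longrightarrow> x \<le> t \<Longrightarrow> DERIV (\<lambda>x. x powr (r - 1)) x :> (r - 1) * x powr (r - 1 - 1)"
      using 2 by (intro has_real_derivative_powr) auto
    obtain z where z: "s < z" "z < t" "t powr (r - 1) - s powr (r - 1) = (t - s) * ((r - 1) * z powr (r - 1 - 1))"
      using MVT2[OF \<open>s < t\<close> der] by blast
    have e: "r - 1 - 1 = r - 2" by simp
    note z = z[unfolded e]
    have "z powr (r - 2) \<le> R powr (r - 2)"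
      using z 2 st r by (intro powr_mono2) auto
    then have "(t - s) * ((r - 1) * z powr (r - 2)) \<le> (t - s) * ((r - 1) * R powr (r - 2))"
      using z r by (intro mult_left_mono) auto
    then show ?thesis using z by (simp add: algebra_simps)
  qed simp
qed

lemma powr_small_aux:
  fixes r t R :: real
  assumes r: "r \<ge> 2" and st: "0 \<le> t" "t \<le> R"
  shows "t powr (r - 1) \<le> R powr (r - 2) * t"
proof -
  have "t powr (r - 1) = t * t powr (r - 2)"
  proof (cases "t = 0")
    case False then show ?thesis using st by (simp add: powr_diff field_simps power2_eq_square)
  qed simp
  also have "\<dots> \<le> t * R powr (r - 2)"
    using st r by (intro mult_left_mono powr_mono2) auto
  finally show ?thesis by (simp add: mult.commute)
qed

definition Wf :: "real \<Rightarrow> real \<Rightarrow> real" where "Wf r x = x * \<bar>x\<bar> powr (r - 2)"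

lemma Wf_pos: "r \<ge> 2 \<Longrightarrow> x \<ge> 0 \<Longrightarrow> Wf r x = x powr (r - 1)"
  by (cases "x = 0") (auto simp: Wf_def powr_diff field_simps power2_eq_square)

lemma Wf_neg: "r \<ge> 2 \<Longrightarrow> x \<le> 0 \<Longrightarrow> Wf r x = - ((- x) powr (r - 1))"
  by (cases "x = 0") (auto simp: Wf_def powr_diff field_simps power2_eq_square)

lemma Wf_lip:
  fixes r s t R :: real
  assumes r: "r \<ge> 2" and st: "s \<le> t" "\<bar>s\<bar> \<le> R" "\<bar>t\<bar> \<le> R"
  shows "Wf r t - Wf r s \<le> (r - 1) * R powr (r - 2) * (t - s)"
proof -
  consider "0 \<le> s" | "t \<le> 0" | "s < 0 \<and> 0 < t" by linarith
  then show ?thesis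
  proof cases
    case 1 then show ?thesis
      using powr_lip_aux[OF r 1 st(1)] st r by (simp add: Wf_pos)
  next
    case 2 then show ?thesis
      using powr_lip_aux[OF r _ _, of "- t" "- s" R] st r by (simp add: Wf_neg algebra_simps)
  next
    case 3
    have "Wf r t - Wf r s = t powr (r - 1) + (- s) powr (r - 1)"
      using 3 r by (simp add: Wf_pos Wf_neg)
    also have "\<dots> \<le> R powr (r - 2) * t + R powr (r - 2) * (- s)"
      using powr_small_aux[OF r, of t R] powr_small_aux[OF r, of "- s" R] 3 st by auto
    also have "\<dots> = 1 * R powr (r - 2) * (t - s)" by (simp add: algebra_simps)
    also have "\<dots> \<le> (r - 1) * R powr (r - 2) * (t - s)"
      using r 3 by (intro mult_right_mono) auto
    finally show ?thesis .
  qed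
qed

lemma taylor_step:
  fixes r a x :: real
  assumes r: "r \<ge> 2" and x: "\<bar>x\<bar> \<le> 1"
  shows "\<bar>a + x\<bar> powr r \<le> \<bar>a\<bar> powr r + r * Wf r a * x
           + r * (r - 1) / 2 * (\<bar>a\<bar> + 1) powr (r - 2) * x\<^sup>2"
proof -
  define R where "R = \<bar>a\<bar> + 1"
  define L where "L = r * (r - 1) * R powr (r - 2)"
  define g where "g z = \<bar>a + z\<bar> powr r - \<bar>a\<bar> powr r - r * Wf r a * z - L / 2 * z\<^sup>2" for z
  define g' where "g' z = r * Wf r (a + z) - r * Wf r a - L * z" for z
  have dg: "DERIV g z :> g' z" for z
  proof -
    have r1: "r > 1" using r by simp
    have i: "DERIV (\<lambda>z. a + z) z :> 0 + 1" by (intro DERIV_add DERIV_const DERIV_ident)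
    have d1: "DERIV (\<lambda>z. \<bar>a + z\<bar> powr r) z :> r * ((a + z) * \<bar>a + z\<bar> powr (r - 2)) * (0 + 1)"
      by (rule DERIV_chain2[where f="\<lambda>x. \<bar>x\<bar> powr r", OF deriv_abs_powr[OF r1] i])
    have d2: "DERIV (\<lambda>z. r * Wf r a * z) z :> r * Wf r a * 1" by (intro DERIV_cmult DERIV_ident)
    have d3: "DERIV (\<lambda>z. L / 2 * z\<^sup>2) z :> L / 2 * (2 * z)"
      by (auto intro!: derivative_eq_intros)
    have "DERIV (\<lambda>z. \<bar>a + z\<bar> powr r - \<bar>a\<bar> powr r) z :> r * ((a + z) * \<bar>a + z\<bar> powr (r - 2)) * (0 + 1) - 0"
      by (rule DERIV_diff[OF d1 DERIV_const])
    from DERIV_diff[OF DERIV_diff[OF this d2] d3]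
    show ?thesis unfolding g_def g'_def Wf_def by (simp add: algebra_simps)
  qed
  have g0: "g 0 = 0" by (simp add: g_def)
  have "g x \<le> 0"
  proof (cases "x \<ge> 0")
    case True
    have "g x \<le> g 0"
    proof (rule deriv_nonpos_imp_antimono[of 0 x g g'])
      fix z assume z: "z \<in> {0..x}"
      have "Wf r (a + z) - Wf r a \<le> (r - 1) * R powr (r - 2) * (a + z - a)"
        using z x by (intro Wf_lip[OF r]) (auto simp: R_def)
      then have "r * (Wf r (a + z) - Wf r a) \<le> r * ((r - 1) * R powr (r - 2) * z)"
        using r by (intro mult_left_mono) auto
      then show "g' z \<le> 0" by (simp add: g'_def L_def algebra_simps)
    qed (use dg True in auto)
    then show ?thesis using g0 by simp
  next
    case False
    have "g x \<le> g 0"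
    proof (rule DERIV_nonneg_imp_nondecreasing[of x 0 g])
      fix z assume z: "x \<le> z" "z \<le> 0"
      have "Wf r a - Wf r (a + z) \<le> (r - 1) * R powr (r - 2) * (a - (a + z))"
        using z x by (intro Wf_lip[OF r]) (auto simp: R_def)
      then have "r * (Wf r a - Wf r (a + z)) \<le> r * ((r - 1) * R powr (r - 2) * (- z))"
        using r by (intro mult_left_mono) auto
      then have "g' z \<ge> 0" by (simp add: g'_def L_def algebra_simps)
      then show "\<exists>y. DERIV g z :> y \<and> 0 \<le> y" using dg by blast
    qed (use False in auto)
    then show ?thesis using g0 by simp
  qed
  then show ?thesis by (simp add: g_def L_def R_def algebra_simps)
qed



lemma num_step:
  fixes r s m :: real and k :: nat
  assumes r: "r \<ge> 2" and s: "0 \<le> s" "s \<le> 1"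
    and m: "0 \<le> m" "m \<le> (r - 1) powr r * s * real k powr (r / 2)"
  shows "m + r * (r - 1) / 2 * s * (m powr (1 / r) + 1) powr (r - 2)
           \<le> (r - 1) powr r * s * real (Suc k) powr (r / 2)"
proof -
  define B where "B = (r - 1) powr r"
  have B1: "(r - 1) powr 2 \<le> B" unfolding B_def using r by (intro powr_mono) auto
  have Bpos: "B \<ge> 0" unfolding B_def by simp
  show ?thesis
  proof (cases "k = 0")
    case True
    then have m0: "m = 0" using m r by simp
    have h: "0 \<le> (r - 1) * (r - 2)" using r by simp
    have h2: "r * r + 2 - r * 3 = (r - 1) * (r - 2)" by (simp add: algebra_simps)
    have "r * 3 \<le> r * r + 2" using h h2 by linarith
    then have "r * (r - 1) / 2 \<le> (r - 1) powr 2"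
      using r by (simp add: powr_numeral power2_eq_square field_simps)
    also have "\<dots> \<le> B" by (rule B1)
    finally have "r * (r - 1) / 2 * s \<le> B * s" using s by (intro mult_right_mono) auto
    then show ?thesis using m0 True r by (simp add: B_def mult.commute mult.left_commute)
  next
    case False
    then have k1: "real k \<ge> 1" by simp
    have mr: "m powr (1 / r) \<le> (r - 1) * real k powr (1 / 2)"
    proof -
      have "m powr (1 / r) \<le> (B * s * real k powr (r / 2)) powr (1 / r)"
        using m r by (intro powr_mono2) (auto simp: B_def)
      also have "\<dots> = B powr (1 / r) * s powr (1 / r) * (real k powr (r / 2)) powr (1 / r)"
        using s Bpos by (simp add: powr_mult)
      also have "B powr (1 / r) = r - 1" unfolding B_def using r by (simp add: powr_powr)
      also have "(real k powr (r / 2)) powr (1 / r) = real k powr (1 / 2)"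
        using r by (simp add: powr_powr)
      also have "s powr (1 / r) \<le> 1" using powr_mono2[of "1 / r" s 1] s r by simp
      then have "(r - 1) * s powr (1 / r) * real k powr (1 / 2) \<le> (r - 1) * 1 * real k powr (1 / 2)"
        using r by (intro mult_right_mono mult_left_mono) auto
      finally show ?thesis by simp
    qed
    have ksq: "real k powr (1 / 2) \<ge> 1" using powr_mono2[of "1 / 2" 1 "real k"] k1 by simp
    have "m powr (1 / r) + 1 \<le> r * real k powr (1 / 2)"
      using mr ksq by (simp add: algebra_simps)
    then have "(m powr (1 / r) + 1) powr (r - 2) \<le> (r * real k powr (1 / 2)) powr (r - 2)"
      using r by (intro powr_mono2) auto
    also have "\<dots> = r powr (r - 2) * real k powr (r / 2 - 1)"
      using r by (simp add: powr_mult powr_powr field_simps)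
    finally have t1: "(m powr (1 / r) + 1) powr (r - 2) \<le> r powr (r - 2) * real k powr (r / 2 - 1)" .
    have "r * (r - 1) / 2 * r powr (r - 2) \<le> r * (r - 1) / 2 * (r - 1) powr (r - 1)"
      using ln_ineq_aux[OF r] r by (intro mult_left_mono) auto
    also have "\<dots> = r / 2 * B"
      unfolding B_def using r by (simp add: powr_diff field_simps)
    finally have t2: "r * (r - 1) / 2 * r powr (r - 2) \<le> r / 2 * B" .
    have tan: "real k powr (r / 2) + r / 2 * real k powr (r / 2 - 1) * (real (Suc k) - real k)
                 \<le> real (Suc k) powr (r / 2)"
      using k1 r by (intro powr_tangent) auto
    have "m + r * (r - 1) / 2 * s * (m powr (1 / r) + 1) powr (r - 2)
          \<le> B * s * real k powr (r / 2) + r * (r - 1) / 2 * s * (r powr (r - 2) * real k powr (r / 2 - 1))"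
      using m t1 s r by (intro add_mono mult_left_mono) (auto simp: B_def)
    also have "\<dots> = B * s * real k powr (r / 2) + s * real k powr (r / 2 - 1) * (r * (r - 1) / 2 * r powr (r - 2))"
      by (simp add: algebra_simps)
    also have "\<dots> \<le> B * s * real k powr (r / 2) + s * real k powr (r / 2 - 1) * (r / 2 * B)"
      using t2 s by (intro add_left_mono mult_left_mono) auto
    also have "\<dots> = B * s * (real k powr (r / 2) + r / 2 * real k powr (r / 2 - 1) * (real (Suc k) - real k))"
      by (simp add: algebra_simps)
    also have "\<dots> \<le> B * s * real (Suc k) powr (r / 2)"
      using tan s Bpos by (intro mult_left_mono) auto
    finally show ?thesis by (simp add: B_def)
  qed
qed



lemma exp_fin:
  fixes f :: "'a \<Rightarrow> real"
  assumes "finite (set_pmf M)"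
  shows "measure_pmf.expectation M f = (\<Sum>x\<in>set_pmf M. f x * pmf M x)"
  using assms by (intro integral_measure_pmf_real) auto

lemma exp_pair_swap:
  fixes F :: "'a \<times> 'b \<Rightarrow> real"
  assumes A: "finite (set_pmf A)" and B: "finite (set_pmf B)"
  shows "measure_pmf.expectation (pair_pmf A B) F
          = measure_pmf.expectation B (\<lambda>b. measure_pmf.expectation A (\<lambda>a. F (a, b)))"
proof -
  have "measure_pmf.expectation (pair_pmf A B) F = (\<Sum>z\<in>set_pmf A \<times> set_pmf B. F z * pmf (pair_pmf A B) z)"
    using A B by (subst exp_fin) auto
  also have "\<dots> = (\<Sum>a\<in>set_pmf A. \<Sum>b\<in>set_pmf B. F (a, b) * (pmf A a * pmf B b))"
    by (subst sum.cartesian_product) (auto intro!: sum.cong simp: pmf_pair)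
  also have "\<dots> = (\<Sum>b\<in>set_pmf B. \<Sum>a\<in>set_pmf A. F (a, b) * (pmf A a * pmf B b))"
    by (rule sum.swap)
  also have "\<dots> = (\<Sum>b\<in>set_pmf B. (\<Sum>a\<in>set_pmf A. F (a, b) * pmf A a) * pmf B b)"
    by (simp add: sum_distrib_right mult.assoc)
  also have "\<dots> = measure_pmf.expectation B (\<lambda>b. measure_pmf.expectation A (\<lambda>a. F (a, b)))"
    using A B by (simp add: exp_fin)
  finally show ?thesis .
qed

lemma exp_const_fin:
  fixes c :: real
  assumes "finite (set_pmf M)"
  shows "measure_pmf.expectation M (\<lambda>x. c) = c"
proof -
  have s1: "(\<Sum>x\<in>set_pmf M. pmf M x) = 1" using assms by (intro sum_pmf_eq_1) auto
  show ?thesis using assms s1 by (simp add: exp_fin sum_distrib_left[symmetric])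
qed

lemma exp_mono_fin:
  fixes f g :: "'a \<Rightarrow> real"
  assumes "finite (set_pmf M)" "\<And>x. x \<in> set_pmf M \<Longrightarrow> f x \<le> g x"
  shows "measure_pmf.expectation M f \<le> measure_pmf.expectation M g"
  using assms by (simp add: exp_fin sum_mono mult_right_mono)

lemma exp_nonneg_fin:
  fixes f :: "'a \<Rightarrow> real"
  assumes "finite (set_pmf M)" "\<And>x. x \<in> set_pmf M \<Longrightarrow> 0 \<le> f x"
  shows "0 \<le> measure_pmf.expectation M f"
  using assms by (simp add: exp_fin sum_nonneg)

lemma exp_affine_fin:
  fixes f :: "'a \<Rightarrow> real"
  assumes "finite (set_pmf M)"
  shows "measure_pmf.expectation M (\<lambda>x. a + b * (f x - c)) = a + b * (measure_pmf.expectation M f - c)"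
proof -
  have s1: "(\<Sum>x\<in>set_pmf M. pmf M x) = 1" using assms by (intro sum_pmf_eq_1) auto
  have "(\<Sum>x\<in>set_pmf M. (a + b * (f x - c)) * pmf M x)
        = a * (\<Sum>x\<in>set_pmf M. pmf M x) + b * (\<Sum>x\<in>set_pmf M. f x * pmf M x) - b * c * (\<Sum>x\<in>set_pmf M. pmf M x)"
    by (simp add: algebra_simps sum.distrib sum_subtractf sum_distrib_left)
  then show ?thesis using assms s1 by (simp add: exp_fin right_diff_distrib)
qed

lemma jensen_powr:
  fixes Y :: "'a \<Rightarrow> real"
  assumes fin: "finite (set_pmf M)" and Y: "\<And>x. x \<in> set_pmf M \<Longrightarrow> 0 \<le> Y x" and p: "p \<ge> 1"
  shows "(measure_pmf.expectation M Y) powr p \<le> measure_pmf.expectation M (\<lambda>x. Y x powr p)"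
proof -
  define c where "c = measure_pmf.expectation M Y"
  have c0: "c \<ge> 0" unfolding c_def using fin Y by (rule exp_nonneg_fin)
  show ?thesis
  proof (cases "c = 0")
    case True
    then show ?thesis using exp_nonneg_fin[OF fin, of "\<lambda>x. Y x powr p"] by (simp add: c_def)
  next
    case False
    then have cp: "c > 0" using c0 by simp
    have "measure_pmf.expectation M (\<lambda>x. c powr p + p * c powr (p - 1) * (Y x - c))
            \<le> measure_pmf.expectation M (\<lambda>x. Y x powr p)"
      using fin by (rule exp_mono_fin) (use powr_tangent[OF cp _ p] Y in auto)
    moreover have "measure_pmf.expectation M (\<lambda>x. c powr p + p * c powr (p - 1) * (Y x - c)) = c powr p"
      using exp_affine_fin[OF fin, of "c powr p" "p * c powr (p - 1)" Y c] by (simp add: c_def)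
    ultimately show ?thesis by (simp add: c_def)
  qed
qed

lemma lyapunov:
  fixes X :: "'a \<Rightarrow> real"
  assumes fin: "finite (set_pmf M)" and X: "\<And>x. x \<in> set_pmf M \<Longrightarrow> 0 \<le> X x"
    and s: "0 < s" "s \<le> r"
  shows "measure_pmf.expectation M (\<lambda>x. X x powr s) \<le> (measure_pmf.expectation M (\<lambda>x. X x powr r)) powr (s / r)"
proof -
  have r: "r > 0" using s by simp
  have "(measure_pmf.expectation M (\<lambda>x. X x powr s)) powr (r / s)
        \<le> measure_pmf.expectation M (\<lambda>x. (X x powr s) powr (r / s))"
    using s by (intro jensen_powr fin) auto
  also have "\<dots> = measure_pmf.expectation M (\<lambda>x. X x powr r)"
    using s by (simp add: powr_powr)
  finally have h: "(measure_pmf.expectation M (\<lambda>x. X x powr s)) powr (r / s) \<le> measure_pmf.expectation M (\<lambda>x. X x powr r)" .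
  have e0: "0 \<le> measure_pmf.expectation M (\<lambda>x. X x powr s)"
    using fin by (rule exp_nonneg_fin) simp
  have "measure_pmf.expectation M (\<lambda>x. X x powr s) = ((measure_pmf.expectation M (\<lambda>x. X x powr s)) powr (r / s)) powr (s / r)"
    using e0 s r by (simp add: powr_powr)
  also have "\<dots> \<le> (measure_pmf.expectation M (\<lambda>x. X x powr r)) powr (s / r)"
    using h s r by (intro powr_mono2) auto
  finally show ?thesis .
qed

lemma conv_point:
  fixes x t r :: real
  assumes x: "x \<ge> 0" and t: "t > 0" and r: "r \<ge> 1"
  shows "(x + 1) powr r \<le> ((t + 1) / t) powr (r - 1) * x powr r + (t + 1) powr (r - 1)"
proof (cases "x = 0")
  case True
  then show ?thesis using t r ge_one_powr_ge_zero[of "t + 1" "r - 1"] by simp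
next
  case False
  then have xp: "x > 0" using x by simp
  define w where "w = 1 / (t + 1)"
  have w: "0 \<le> w" "w \<le> 1" using t by (auto simp: w_def)
  have cv: "(\<lambda>x. x powr r) ((1 - w) *\<^sub>R (x * (t + 1) / t) + w *\<^sub>R (t + 1))
      \<le> (1 - w) * (\<lambda>x. x powr r) (x * (t + 1) / t) + w * (\<lambda>x. x powr r) (t + 1)"
    by (rule convex_onD[OF powr_convex[OF r] w]) (use xp t in auto)
  have w1: "1 - w = t / (t + 1)" using t by (simp add: w_def field_simps)
  have a1: "t / (t + 1) * (x * (t + 1) / t) = x" using t by simp
  have a2: "w * (t + 1) = 1" using t by (simp add: w_def)
  have e1: "(1 - w) *\<^sub>R (x * (t + 1) / t) + w *\<^sub>R (t + 1) = x + 1"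
    using a1 a2 w1 by simp
  have e2: "(1 - w) * (x * (t + 1) / t) powr r = ((t + 1) / t) powr (r - 1) * x powr r"
  proof -
    define K where "K = (t + 1) / t"
    have Kp: "K > 0" using t by (simp add: K_def)
    have "x * (t + 1) / t = x * K" by (simp add: K_def)
    then have "(x * (t + 1) / t) powr r = x powr r * K powr r"
      using x Kp by (simp add: powr_mult)
    moreover have "K powr r = K powr (r - 1) * K"
      using Kp by (simp add: powr_diff)
    moreover have "1 - w = 1 / K" using t by (simp add: w_def K_def field_simps)
    ultimately have "(1 - w) * (x * (t + 1) / t) powr r = (1 / K) * (x powr r * (K powr (r - 1) * K))"
      by simp
    also have "\<dots> = K powr (r - 1) * x powr r" using Kp by simp
    finally show ?thesis by (simp add: K_def)
  qed
  have e3: "w * (t + 1) powr r = (t + 1) powr (r - 1)"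
    using t by (simp add: w_def powr_diff)
  show ?thesis using cv e1 e2 e3 by simp
qed

lemma mink_aux:
  fixes X :: "'a \<Rightarrow> real"
  assumes fin: "finite (set_pmf M)" and X: "\<And>x. x \<in> set_pmf M \<Longrightarrow> 0 \<le> X x" and r: "r \<ge> 2"
  shows "measure_pmf.expectation M (\<lambda>x. (X x + 1) powr (r - 2))
          \<le> ((measure_pmf.expectation M (\<lambda>x. X x powr r)) powr (1 / r) + 1) powr (r - 2)"
proof (cases "r = 2")
  case True
  have one: "(X x + 1) powr (r - 2) = 1" if "x \<in> set_pmf M" for x
  proof -
    have "X x + 1 \<noteq> 0" using X[OF that] by simp
    then show ?thesis using True by simp
  qed
  have "measure_pmf.expectation M (\<lambda>x. (X x + 1) powr (r - 2)) = measure_pmf.expectation M (\<lambda>x. 1)"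
    using fin one sum_pmf_eq_1[of "set_pmf M" M] by (simp add: exp_fin)
  also have "\<dots> = 1" using fin by (rule exp_const_fin)
  moreover have "0 < (measure_pmf.expectation M (\<lambda>x. X x powr r)) powr (1 / r) + 1"
    by (rule add_nonneg_pos) simp_all
  ultimately show ?thesis using True by simp
next
  case False
  then have r2: "r > 2" using r by simp
  define m where "m = measure_pmf.expectation M (\<lambda>x. X x powr r)"
  define t where "t = m powr (1 / r)"
  have m0: "m \<ge> 0" unfolding m_def using fin by (rule exp_nonneg_fin) simp
  have t0: "t \<ge> 0" unfolding t_def by simp
  have Z: "measure_pmf.expectation M (\<lambda>x. (X x + 1) powr r) \<le> (t + 1) powr r"
  proof (cases "m = 0")
    case True
    have all0: "X x = 0" if "x \<in> set_pmf M" for x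
    proof -
      have "(\<Sum>y\<in>set_pmf M. X y powr r * pmf M y) = 0" using True fin by (simp add: m_def exp_fin)
      then have "\<forall>y\<in>set_pmf M. X y powr r * pmf M y = 0"
        using fin by (subst (asm) sum_nonneg_eq_0_iff) auto
      then have "X x powr r * pmf M x = 0" using that by auto
      moreover have "pmf M x > 0" using that by (simp add: pmf_positive)
      ultimately show ?thesis by simp
    qed
    have "measure_pmf.expectation M (\<lambda>x. (X x + 1) powr r) = measure_pmf.expectation M (\<lambda>x. 1)"
      using fin all0 sum_pmf_eq_1[of "set_pmf M" M] by (simp add: exp_fin)
    then show ?thesis using True exp_const_fin[OF fin, of 1] by (simp add: t_def)
  next
    case False
    then have mp: "m > 0" using m0 by simp
    then have tp: "t > 0" by (simp add: t_def)
    have tr: "t powr r = m" using mp r2 by (simp add: t_def powr_powr)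
    have "measure_pmf.expectation M (\<lambda>x. (X x + 1) powr r)
          \<le> measure_pmf.expectation M (\<lambda>x. (t + 1) powr (r - 1) + ((t + 1) / t) powr (r - 1) * (X x powr r - 0))"
    proof (rule exp_mono_fin[OF fin])
      fix x assume "x \<in> set_pmf M"
      from conv_point[OF X[OF this] tp, of r] r2
      show "(X x + 1) powr r \<le> (t + 1) powr (r - 1) + ((t + 1) / t) powr (r - 1) * (X x powr r - 0)"
        by (smt (verit))
    qed
    also have "\<dots> = (t + 1) powr (r - 1) + ((t + 1) / t) powr (r - 1) * m"
      by (subst exp_affine_fin[OF fin]) (simp add: m_def)
    also have "((t + 1) / t) powr (r - 1) * m = (t + 1) powr (r - 1) * t"
    proof -
      have "((t + 1) / t) powr (r - 1) * t powr r = (t + 1) powr (r - 1) * (t powr r / t powr (r - 1))"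
        using tp by (simp add: powr_divide field_simps)
      also have "t powr r / t powr (r - 1) = t" using tp by (simp add: powr_diff)
      finally show ?thesis using tr by simp
    qed
    also have "(t + 1) powr (r - 1) + (t + 1) powr (r - 1) * t = (t + 1) powr r"
    proof -
      have q: "(t + 1) powr (r - 1) = (t + 1) powr r / (t + 1)" using tp by (simp add: powr_diff)
      have "(t + 1) powr (r - 1) + (t + 1) powr (r - 1) * t = (t + 1) powr (r - 1) * (t + 1)"
        by (simp add: algebra_simps)
      also have "\<dots> = (t + 1) powr r" unfolding q using tp by simp
      finally show ?thesis .
    qed
    finally show ?thesis .
  qed
  have "measure_pmf.expectation M (\<lambda>x. (X x + 1) powr (r - 2))
        \<le> (measure_pmf.expectation M (\<lambda>x. (X x + 1) powr r)) powr ((r - 2) / r)"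
    using r2 X by (intro lyapunov[OF fin]) (auto intro: add_nonneg_nonneg)
  also have "\<dots> \<le> ((t + 1) powr r) powr ((r - 2) / r)"
    using Z r2 by (intro powr_mono2) (auto intro!: exp_nonneg_fin[OF fin] simp: X)
  also have "\<dots> = (t + 1) powr (r - 2)" using r2 t0 by (simp add: powr_powr)
  finally show ?thesis by (simp add: t_def m_def)
qed



lemma exp_lin2:
  fixes f g :: "'a \<Rightarrow> real"
  assumes "finite (set_pmf M)"
  shows "measure_pmf.expectation M (\<lambda>x. f x + c * g x) = measure_pmf.expectation M f + c * measure_pmf.expectation M g"
  using assms by (simp add: exp_fin sum.distrib sum_distrib_left algebra_simps)

lemma exp_quad:
  fixes g :: "'a \<Rightarrow> real"
  assumes fin: "finite (set_pmf M)"
  shows "measure_pmf.expectation M (\<lambda>y. A + B * g y + C * (g y)\<^sup>2)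
          = A + B * measure_pmf.expectation M g + C * measure_pmf.expectation M (\<lambda>y. (g y)\<^sup>2)"
proof -
  have s1: "(\<Sum>x\<in>set_pmf M. pmf M x) = 1" using fin by (intro sum_pmf_eq_1) auto
  have "(\<Sum>x\<in>set_pmf M. (A + B * g x + C * (g x)\<^sup>2) * pmf M x)
       = A * (\<Sum>x\<in>set_pmf M. pmf M x) + B * (\<Sum>x\<in>set_pmf M. g x * pmf M x) + C * (\<Sum>x\<in>set_pmf M. (g x)\<^sup>2 * pmf M x)"
    by (simp add: algebra_simps sum.distrib sum_distrib_left)
  then show ?thesis using fin s1 by (simp add: exp_fin)
qed

lemma exp_diff_fin:
  fixes f g :: "'a \<Rightarrow> real"
  assumes "finite (set_pmf M)"
  shows "measure_pmf.expectation M (\<lambda>x. f x - g x) = measure_pmf.expectation M f - measure_pmf.expectation M g"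
  using assms by (simp add: exp_fin sum_subtractf algebra_simps)

lemma exp_abs_le1:
  fixes g :: "'a \<Rightarrow> real"
  assumes fin: "finite (set_pmf M)" and g: "\<And>y. y \<in> set_pmf M \<Longrightarrow> \<bar>g y\<bar> \<le> 1"
  shows "\<bar>measure_pmf.expectation M g\<bar> \<le> 1"
proof -
  have s1: "(\<Sum>x\<in>set_pmf M. pmf M x) = 1" using fin by (intro sum_pmf_eq_1) auto
  have "\<bar>\<Sum>x\<in>set_pmf M. g x * pmf M x\<bar> \<le> (\<Sum>x\<in>set_pmf M. \<bar>g x * pmf M x\<bar>)"
    by (rule sum_abs)
  also have "\<dots> \<le> (\<Sum>x\<in>set_pmf M. pmf M x)"
    by (intro sum_mono) (use g in \<open>auto simp: abs_mult intro!: mult_left_le_one_le\<close>)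
  finally show ?thesis using fin s1 by (simp add: exp_fin)
qed

lemma centered_le1:
  fixes \<phi> :: "'a \<Rightarrow> real"
  assumes fin: "finite (set_pmf p)" and lip: "\<And>a b. a \<in> set_pmf p \<Longrightarrow> b \<in> set_pmf p \<Longrightarrow> \<bar>\<phi> a - \<phi> b\<bar> \<le> 1"
    and y: "y \<in> set_pmf p"
  shows "\<bar>\<phi> y - measure_pmf.expectation p \<phi>\<bar> \<le> 1"
proof -
  have "\<phi> y - measure_pmf.expectation p \<phi> = measure_pmf.expectation p (\<lambda>b. \<phi> y - \<phi> b)"
    using exp_diff_fin[OF fin, of "\<lambda>_. \<phi> y" \<phi>] exp_const_fin[OF fin] by simp
  also have "\<bar>\<dots>\<bar> \<le> 1" using fin by (rule exp_abs_le1) (use lip y in auto)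
  finally show ?thesis .
qed

lemma var_bound:
  fixes \<phi> :: "'a \<Rightarrow> real"
  assumes fin: "finite (set_pmf p)" and lip: "\<And>a b. a \<in> set_pmf p \<Longrightarrow> b \<in> set_pmf p \<Longrightarrow> \<bar>\<phi> a - \<phi> b\<bar> \<le> 1"
  shows "measure_pmf.expectation p (\<lambda>y. (\<phi> y - measure_pmf.expectation p \<phi>)\<^sup>2)
          \<le> (1 - (\<Sum>a\<in>set_pmf p. (pmf p a)\<^sup>2)) / 2"
proof -
  define S where "S = set_pmf p"
  define c where "c = measure_pmf.expectation p \<phi>"
  define D where "D a = \<phi> a - c" for a
  define w where "w a = pmf p a" for a
  have finS: "finite S" using fin by (simp add: S_def)
  have s1: "(\<Sum>x\<in>S. w x) = 1" unfolding S_def w_def using fin by (intro sum_pmf_eq_1) auto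
  have cdef: "c = (\<Sum>x\<in>S. \<phi> x * w x)" unfolding c_def S_def w_def using fin by (rule exp_fin)
  have D0: "(\<Sum>x\<in>S. w x * D x) = 0"
  proof -
    have "(\<Sum>x\<in>S. w x * D x) = (\<Sum>x\<in>S. \<phi> x * w x) - c * (\<Sum>x\<in>S. w x)"
      by (simp add: D_def algebra_simps sum_subtractf sum_distrib_left)
    then show ?thesis using s1 cdef by simp
  qed
  define V where "V = (\<Sum>x\<in>S. w x * (D x)\<^sup>2)"
  have Vdef: "measure_pmf.expectation p (\<lambda>y. (\<phi> y - measure_pmf.expectation p \<phi>)\<^sup>2) = V"
    unfolding V_def S_def w_def D_def c_def using fin by (simp add: exp_fin mult.commute)
  have pt: "w a * w b * (D a - D b)\<^sup>2 = w b * (w a * (D a)\<^sup>2) + w a * (w b * (D b)\<^sup>2) - 2 * ((w a * D a) * (w b * D b))" for a b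
    by (simp add: power2_eq_square algebra_simps)
  have "(\<Sum>a\<in>S. \<Sum>b\<in>S. w a * w b * (D a - D b)\<^sup>2)
      = (\<Sum>a\<in>S. \<Sum>b\<in>S. w b * (w a * (D a)\<^sup>2)) + (\<Sum>a\<in>S. \<Sum>b\<in>S. w a * (w b * (D b)\<^sup>2))
        - 2 * (\<Sum>a\<in>S. \<Sum>b\<in>S. (w a * D a) * (w b * D b))"
    unfolding pt by (simp add: sum.distrib sum_subtractf sum_distrib_left)
  also have "(\<Sum>a\<in>S. \<Sum>b\<in>S. w b * (w a * (D a)\<^sup>2)) = V"
    by (simp add: V_def sum_distrib_right[symmetric] s1)
  also have "(\<Sum>a\<in>S. \<Sum>b\<in>S. w a * (w b * (D b)\<^sup>2)) = V"
    by (simp add: V_def sum_distrib_left[symmetric] sum_distrib_right[symmetric] s1)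
  also have "(\<Sum>a\<in>S. \<Sum>b\<in>S. (w a * D a) * (w b * D b)) = 0"
    by (simp add: sum_distrib_left[symmetric] sum_distrib_right[symmetric] D0)
  finally have ident: "(\<Sum>a\<in>S. \<Sum>b\<in>S. w a * w b * (D a - D b)\<^sup>2) = 2 * V" by simp
  have "(\<Sum>a\<in>S. \<Sum>b\<in>S. w a * w b * (D a - D b)\<^sup>2) \<le> (\<Sum>a\<in>S. \<Sum>b\<in>S. w a * w b * (if a = b then 0 else 1))"
  proof (intro sum_mono)
    fix a b assume ab: "a \<in> S" "b \<in> S"
    have "(D a - D b)\<^sup>2 \<le> (if a = b then 0 else 1)"
    proof (cases "a = b")
      case False
      have "\<bar>D a - D b\<bar> \<le> 1" using lip[of a b] ab by (simp add: D_def S_def)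
      then have "\<bar>D a - D b\<bar>\<^sup>2 \<le> 1\<^sup>2" by (intro power_mono) auto
      then show ?thesis using False by simp
    qed simp
    then show "w a * w b * (D a - D b)\<^sup>2 \<le> w a * w b * (if a = b then 0 else 1)"
      by (intro mult_left_mono) (auto simp: w_def)
  qed
  also have "\<dots> = (\<Sum>a\<in>S. w a * ((\<Sum>b\<in>S. w b) - w a))"
  proof (intro sum.cong refl)
    fix a assume a: "a \<in> S"
    have "(\<Sum>b\<in>S. w a * w b * (if a = b then 0 else 1)) = w a * (\<Sum>b\<in>S. w b - (if a = b then w b else 0))"
      by (simp add: sum_distrib_left if_distrib algebra_simps cong: if_cong)
    also have "\<dots> = w a * ((\<Sum>b\<in>S. w b) - w a)"
      using a finS by (simp add: sum_subtractf)
    finally show "(\<Sum>b\<in>S. w a * w b * (if a = b then 0 else 1)) = w a * ((\<Sum>b\<in>S. w b) - w a)" .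
  qed
  also have "\<dots> = 1 - (\<Sum>a\<in>S. (w a)\<^sup>2)"
    using s1 by (simp add: algebra_simps sum_subtractf power2_eq_square)
  finally have "2 * V \<le> 1 - (\<Sum>a\<in>S. (w a)\<^sup>2)" using ident by simp
  then show ?thesis using Vdef by (simp add: S_def w_def)
qed



definition lip1 :: "'i set \<Rightarrow> (('i \<Rightarrow> 'a) \<Rightarrow> real) \<Rightarrow> bool" where
  "lip1 I f \<longleftrightarrow> (\<forall>h j a. j \<in> I \<longrightarrow> \<bar>f (h(j := a)) - f h\<bar> \<le> 1)"

lemma fin_Pi_pmf:
  assumes "finite I" "finite (set_pmf p)"
  shows "finite (set_pmf (Pi_pmf I dflt (\<lambda>_. p)))"
  using assms by (subst set_Pi_pmf) (auto intro!: finite_PiE_dflt)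

lemma inner_step:
  fixes f :: "'a \<Rightarrow> real" and a r :: real
  assumes fin: "finite (set_pmf p)" and r: "r \<ge> 2"
    and lip: "\<And>x y. x \<in> set_pmf p \<Longrightarrow> y \<in> set_pmf p \<Longrightarrow> \<bar>f x - f y\<bar> \<le> 1"
  shows "measure_pmf.expectation p (\<lambda>y. \<bar>a + (f y - measure_pmf.expectation p f)\<bar> powr r)
    \<le> \<bar>a\<bar> powr r + r * (r - 1) / 2 * (\<bar>a\<bar> + 1) powr (r - 2) * ((1 - (\<Sum>b\<in>set_pmf p. (pmf p b)\<^sup>2)) / 2)"
proof -
  define d where "d y = f y - measure_pmf.expectation p f" for y
  define K where "K = r * (r - 1) / 2 * (\<bar>a\<bar> + 1) powr (r - 2)"
  have K0: "K \<ge> 0" using r by (simp add: K_def)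
  have "measure_pmf.expectation p (\<lambda>y. \<bar>a + d y\<bar> powr r)
        \<le> measure_pmf.expectation p (\<lambda>y. \<bar>a\<bar> powr r + r * Wf r a * d y + K * (d y)\<^sup>2)"
  proof (rule exp_mono_fin[OF fin])
    fix y assume "y \<in> set_pmf p"
    then have "\<bar>d y\<bar> \<le> 1" unfolding d_def using fin lip by (intro centered_le1) auto
    then show "\<bar>a + d y\<bar> powr r \<le> \<bar>a\<bar> powr r + r * Wf r a * d y + K * (d y)\<^sup>2"
      using taylor_step[OF r, of "d y" a] by (simp add: K_def)
  qed
  also have "\<dots> = \<bar>a\<bar> powr r + r * Wf r a * measure_pmf.expectation p d + K * measure_pmf.expectation p (\<lambda>y. (d y)\<^sup>2)"
    using fin by (rule exp_quad)
  also have "measure_pmf.expectation p d = 0"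
    unfolding d_def using exp_diff_fin[OF fin, of f "\<lambda>_. measure_pmf.expectation p f"] exp_const_fin[OF fin] by simp
  also have "K * measure_pmf.expectation p (\<lambda>y. (d y)\<^sup>2) \<le> K * ((1 - (\<Sum>b\<in>set_pmf p. (pmf p b)\<^sup>2)) / 2)"
    unfolding d_def using K0 var_bound[OF fin lip] by (intro mult_left_mono) auto
  finally show ?thesis by (simp add: d_def K_def)
qed

lemma gen_moment:
  fixes p :: "'a pmf" and I :: "'i set" and dflt :: 'a and r :: real
  assumes fin: "finite (set_pmf p)" and I: "finite I" and r: "r \<ge> 2"
  shows "lip1 I f \<Longrightarrow> measure_pmf.expectation (Pi_pmf I dflt (\<lambda>_. p))
            (\<lambda>h. \<bar>f h - measure_pmf.expectation (Pi_pmf I dflt (\<lambda>_. p)) f\<bar> powr r)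
          \<le> (r - 1) powr r * ((1 - (\<Sum>b\<in>set_pmf p. (pmf p b)\<^sup>2)) / 2) * real (card I) powr (r / 2)"
  using I
proof (induction I arbitrary: f rule: finite_induct)
  case empty
  then show ?case by simp
next
  case (insert i I)
  define \<sigma> where "\<sigma> = (1 - (\<Sum>b\<in>set_pmf p. (pmf p b)\<^sup>2)) / 2"
  define \<mu> where "\<mu> = Pi_pmf I dflt (\<lambda>_. p)"
  define G where "G h = measure_pmf.expectation p (\<lambda>y. f (h(i := y)))" for h
  have fin\<mu>: "finite (set_pmf \<mu>)" unfolding \<mu>_def using insert.hyps(1) fin by (rule fin_Pi_pmf)
  have Pi_ins: "Pi_pmf (insert i I) dflt (\<lambda>_. p) = map_pmf (\<lambda>(y, h). h(i := y)) (pair_pmf p \<mu>)"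
    unfolding \<mu>_def using insert.hyps by (intro Pi_pmf_insert) auto
  have EF: "measure_pmf.expectation (Pi_pmf (insert i I) dflt (\<lambda>_. p)) F
            = measure_pmf.expectation \<mu> (\<lambda>h. measure_pmf.expectation p (\<lambda>y. F (h(i := y))))" for F :: "_ \<Rightarrow> real"
    unfolding Pi_ins by (simp add: exp_pair_swap[OF fin fin\<mu>] case_prod_beta)
  define c where "c = measure_pmf.expectation \<mu> G"
  have Ef: "measure_pmf.expectation (Pi_pmf (insert i I) dflt (\<lambda>_. p)) f = c"
    unfolding EF c_def G_def ..
  have lipf: "\<bar>f (h(j := a)) - f h\<bar> \<le> 1" if "j \<in> insert i I" for h j a
    using insert.prems that unfolding lip1_def by blast
  have lipG: "lip1 I G"
    unfolding lip1_def
  proof (intro allI impI)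
    fix h j a assume j: "j \<in> I"
    then have ji: "j \<noteq> i" using insert.hyps by auto
    have "G (h(j := a)) - G h = measure_pmf.expectation p (\<lambda>y. f ((h(i := y))(j := a)) - f (h(i := y)))"
      unfolding G_def using exp_diff_fin[OF fin] ji by (simp add: fun_upd_twist)
    also have "\<bar>\<dots>\<bar> \<le> 1" using fin by (rule exp_abs_le1) (use lipf j in auto)
    finally show "\<bar>G (h(j := a)) - G h\<bar> \<le> 1" .
  qed
  define m where "m = measure_pmf.expectation \<mu> (\<lambda>h. \<bar>G h - c\<bar> powr r)"
  have IH: "m \<le> (r - 1) powr r * \<sigma> * real (card I) powr (r / 2)"
    using insert.IH[OF lipG] by (simp add: m_def c_def \<mu>_def \<sigma>_def)
  have m0: "m \<ge> 0" unfolding m_def using fin\<mu> by (rule exp_nonneg_fin) simp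
  define K where "K = r * (r - 1) / 2"
  have pt: "measure_pmf.expectation p (\<lambda>y. \<bar>f (h(i := y)) - c\<bar> powr r)
            \<le> \<bar>G h - c\<bar> powr r + K * \<sigma> * (\<bar>G h - c\<bar> + 1) powr (r - 2)" for h
  proof -
    have l: "\<bar>f (h(i := x)) - f (h(i := y))\<bar> \<le> 1" for x y
      using lipf[where h="h(i := y)" and j=i and a=x] by simp
    have "measure_pmf.expectation p (\<lambda>y. \<bar>f (h(i := y)) - c\<bar> powr r)
          = measure_pmf.expectation p (\<lambda>y. \<bar>(G h - c) + (f (h(i := y)) - G h)\<bar> powr r)"
      by simp
    also have "\<dots> \<le> \<bar>G h - c\<bar> powr r + r * (r - 1) / 2 * (\<bar>G h - c\<bar> + 1) powr (r - 2) * \<sigma>"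
      unfolding G_def \<sigma>_def by (rule inner_step[OF fin r]) (use l in auto)
    finally show ?thesis by (simp add: K_def mult_ac)
  qed
  have "measure_pmf.expectation (Pi_pmf (insert i I) dflt (\<lambda>_. p)) (\<lambda>h. \<bar>f h - c\<bar> powr r)
        = measure_pmf.expectation \<mu> (\<lambda>h. measure_pmf.expectation p (\<lambda>y. \<bar>f (h(i := y)) - c\<bar> powr r))"
    by (rule EF)
  also have "\<dots> \<le> measure_pmf.expectation \<mu> (\<lambda>h. \<bar>G h - c\<bar> powr r + K * \<sigma> * (\<bar>G h - c\<bar> + 1) powr (r - 2))"
    using fin\<mu> by (rule exp_mono_fin) (rule pt)
  also have "\<dots> = m + K * \<sigma> * measure_pmf.expectation \<mu> (\<lambda>h. (\<bar>G h - c\<bar> + 1) powr (r - 2))"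
    unfolding m_def using fin\<mu> by (rule exp_lin2)
  also have "\<dots> \<le> m + K * \<sigma> * (m powr (1 / r) + 1) powr (r - 2)"
  proof -
    have \<sigma>0: "\<sigma> \<ge> 0"
    proof -
      have "(\<Sum>b\<in>set_pmf p. (pmf p b)\<^sup>2) \<le> (\<Sum>b\<in>set_pmf p. pmf p b)"
        by (intro sum_mono) (auto simp: power2_eq_square pmf_le_1 intro!: mult_left_le_one_le)
      also have "\<dots> = 1" using fin by (intro sum_pmf_eq_1) auto
      finally show ?thesis by (simp add: \<sigma>_def)
    qed
    have "measure_pmf.expectation \<mu> (\<lambda>h. (\<bar>G h - c\<bar> + 1) powr (r - 2)) \<le> (m powr (1 / r) + 1) powr (r - 2)"
      unfolding m_def using mink_aux[OF fin\<mu>, of "\<lambda>h. \<bar>G h - c\<bar>" r] r by simp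
    then show ?thesis using \<sigma>0 r by (intro add_left_mono mult_left_mono) (auto simp: K_def)
  qed
  also have "\<dots> \<le> (r - 1) powr r * \<sigma> * real (Suc (card I)) powr (r / 2)"
  proof -
    have \<sigma>1: "\<sigma> \<le> 1"
    proof -
      have "0 \<le> (\<Sum>b\<in>set_pmf p. (pmf p b)\<^sup>2)" by (intro sum_nonneg) simp
      then show ?thesis by (simp add: \<sigma>_def)
    qed
    have \<sigma>0: "\<sigma> \<ge> 0"
    proof -
      have "(\<Sum>b\<in>set_pmf p. (pmf p b)\<^sup>2) \<le> (\<Sum>b\<in>set_pmf p. pmf p b)"
        by (intro sum_mono) (auto simp: power2_eq_square pmf_le_1 intro!: mult_left_le_one_le)
      also have "\<dots> = 1" using fin by (intro sum_pmf_eq_1) auto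
      finally show ?thesis by (simp add: \<sigma>_def)
    qed
    show ?thesis using num_step[OF r \<sigma>0 \<sigma>1 m0 IH] by (simp add: K_def mult_ac)
  qed
  finally show ?case using Ef insert.hyps by (simp add: \<sigma>_def)
qed



definition LCS :: "nat \<Rightarrow> (nat \<Rightarrow> 'a) \<Rightarrow> (nat \<Rightarrow> 'a) \<Rightarrow> nat set" where
  "LCS n x y = {k. \<exists>i j :: nat \<Rightarrow> nat.
      (\<forall>s\<in>{1..k}. 1 \<le> i s \<and> i s \<le> n \<and> 1 \<le> j s \<and> j s \<le> n \<and> x (i s) = y (j s)) \<and>
      (\<forall>s\<in>{1..<k}. i s < i (Suc s) \<and> j s < j (Suc s))}"

lemma LC_eq: "LC n x y = Max (LCS n x y)"
  by (simp add: LC_def LCS_def)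

lemma strict_seg:
  fixes i :: "nat \<Rightarrow> nat"
  assumes H: "\<forall>s\<in>{1..<k}. i s < i (Suc s)"
  shows "1 \<le> s \<Longrightarrow> s < s' \<Longrightarrow> s' \<le> k \<Longrightarrow> i s < i s'"
proof (induction s')
  case 0 then show ?case by simp
next
  case (Suc s'')
  show ?case
  proof (cases "s = s''")
    case True
    then show ?thesis using H Suc.prems by auto
  next
    case False
    then have "s < s''" using Suc.prems by simp
    then have "i s < i s''" using Suc.IH Suc.prems by simp
    also have "i s'' < i (Suc s'')" using H Suc.prems \<open>s < s''\<close> by auto
    finally show ?thesis .
  qed
qed

lemma LCS_le:
  assumes "k \<in> LCS n x y" shows "k \<le> n"
proof -
  obtain i j :: "nat \<Rightarrow> nat" where
    H1: "\<forall>s\<in>{1..k}. 1 \<le> i s \<and> i s \<le> n \<and> 1 \<le> j s \<and> j s \<le> n \<and> x (i s) = y (j s)" and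
    H2: "\<forall>s\<in>{1..<k}. i s < i (Suc s) \<and> j s < j (Suc s)"
    using assms unfolding LCS_def by blast
  have ge: "s \<le> i s" if "1 \<le> s" "s \<le> k" for s
    using that
  proof (induction s)
    case 0 then show ?case by simp
  next
    case (Suc s)
    show ?case
    proof (cases "s = 0")
      case True then show ?thesis using H1 Suc.prems by auto
    next
      case False
      then have "s \<le> i s" using Suc by simp
      moreover have "i s < i (Suc s)" using H2 Suc.prems False by auto
      ultimately show ?thesis by simp
    qed
  qed
  show ?thesis
  proof (cases "k = 0")
    case False
    then have "k \<le> i k" using ge by simp
    also have "i k \<le> n" using H1 False by auto
    finally show ?thesis .
  qed simp
qed

lemma LCS_fin: "finite (LCS n x y)"
  by (rule finite_subset[of _ "{..n}"]) (auto dest: LCS_le)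

lemma LCS_0: "0 \<in> LCS n x y"
  unfolding LCS_def by auto

lemma LC_ge: "k \<in> LCS n x y \<Longrightarrow> k \<le> LC n x y"
  unfolding LC_eq using LCS_fin by (rule Max_ge)

lemma LC_in: "LC n x y \<in> LCS n x y"
proof -
  have "LCS n x y \<noteq> {}" using LCS_0[of n x y] by blast
  then show ?thesis unfolding LC_eq by (rule Max_in[OF LCS_fin])
qed

lemma LCS_sym:
  assumes "k \<in> LCS n x y" shows "k \<in> LCS n y x"
proof -
  obtain i j :: "nat \<Rightarrow> nat" where
    H1: "\<forall>s\<in>{1..k}. 1 \<le> i s \<and> i s \<le> n \<and> 1 \<le> j s \<and> j s \<le> n \<and> x (i s) = y (j s)" and
    H2: "\<forall>s\<in>{1..<k}. i s < i (Suc s) \<and> j s < j (Suc s)"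
    using assms unfolding LCS_def by blast
  have W: "(\<forall>s\<in>{1..k}. 1 \<le> j s \<and> j s \<le> n \<and> 1 \<le> i s \<and> i s \<le> n \<and> y (j s) = x (i s)) \<and>
      (\<forall>s\<in>{1..<k}. j s < j (Suc s) \<and> i s < i (Suc s))"
    using H1 H2 by auto
  show ?thesis unfolding LCS_def by (rule CollectI, rule exI[of _ j], rule exI[of _ i], rule W)
qed

lemma LC_sym: "LC n x y = LC n y x"
proof -
  have "LCS n x y = LCS n y x" using LCS_sym by blast
  then show ?thesis by (simp add: LC_eq)
qed

lemma LCS_remove:
  assumes k: "k \<in> LCS n x y" "k \<ge> 1"
  shows "k - 1 \<in> LCS n (x(t := a)) y"
proof -
  obtain i j :: "nat \<Rightarrow> nat" where
    H1: "\<forall>s\<in>{1..k}. 1 \<le> i s \<and> i s \<le> n \<and> 1 \<le> j s \<and> j s \<le> n \<and> x (i s) = y (j s)" and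
    H2: "\<forall>s\<in>{1..<k}. i s < i (Suc s) \<and> j s < j (Suc s)"
    using k unfolding LCS_def by blast
  have Hi: "\<forall>s\<in>{1..<k}. i s < i (Suc s)" and Hj: "\<forall>s\<in>{1..<k}. j s < j (Suc s)" using H2 by auto
  have inj: "s = s'" if "s \<in> {1..k}" "s' \<in> {1..k}" "i s = i s'" for s s'
  proof (rule ccontr)
    assume "s \<noteq> s'"
    then consider "s < s'" | "s' < s" by linarith
    then show False
      using strict_seg[OF Hi, of s s'] strict_seg[OF Hi, of s' s] that by cases auto
  qed
  define s0 where "s0 = (if \<exists>s\<in>{1..k}. i s = t then (SOME s. s \<in> {1..k} \<and> i s = t) else k)"
  have s0: "s0 \<in> {1..k}"
  proof (cases "\<exists>s\<in>{1..k}. i s = t")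
    case True
    then have "\<exists>s. s \<in> {1..k} \<and> i s = t" by blast
    from someI_ex[OF this] show ?thesis using True by (simp add: s0_def)
  next
    case False then show ?thesis using k by (simp add: s0_def)
  qed
  have hit: "s = s0" if s: "s \<in> {1..k}" "i s = t" for s
  proof -
    have ex: "\<exists>s. s \<in> {1..k} \<and> i s = t" using s by blast
    then have T: "\<exists>s\<in>{1..k}. i s = t" by blast
    from someI_ex[OF ex] have sm: "(SOME s. s \<in> {1..k} \<and> i s = t) \<in> {1..k}"
        "i (SOME s. s \<in> {1..k} \<and> i s = t) = t" by auto
    have "s = (SOME s. s \<in> {1..k} \<and> i s = t)" using inj[OF s(1) sm(1)] s(2) sm(2) by simp
    then show ?thesis using T by (simp add: s0_def)
  qed
  define g where "g s = (if s < s0 then s else Suc s)" for s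
  have g1: "g s \<in> {1..k}" "g s \<noteq> s0" if "s \<in> {1..k - 1}" for s
    using that s0 by (auto simp: g_def)
  have g2: "g s < g (Suc s)" for s by (simp add: g_def)
  show ?thesis unfolding LCS_def
  proof (rule CollectI, rule exI[of _ "i \<circ> g"], rule exI[of _ "j \<circ> g"], rule conjI[OF ballI ballI])
    fix s assume s: "s \<in> {1..k - 1}"
    have gs: "g s \<in> {1..k}" "g s \<noteq> s0" using g1[OF s] by auto
    have nt: "i (g s) \<noteq> t" using hit[OF gs(1)] gs(2) by auto
    show "1 \<le> (i \<circ> g) s \<and> (i \<circ> g) s \<le> n \<and> 1 \<le> (j \<circ> g) s \<and> (j \<circ> g) s \<le> n \<and>
          (x(t := a)) ((i \<circ> g) s) = y ((j \<circ> g) s)"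
      using H1 gs(1) nt by auto
  next
    fix s assume s: "s \<in> {1..<k - 1}"
    then have a1: "g s \<in> {1..k}" "g (Suc s) \<in> {1..k}" using g1[of s] g1[of "Suc s"] by auto
    show "(i \<circ> g) s < (i \<circ> g) (Suc s) \<and> (j \<circ> g) s < (j \<circ> g) (Suc s)"
      using strict_seg[OF Hi, of "g s" "g (Suc s)"] strict_seg[OF Hj, of "g s" "g (Suc s)"] a1 g2[of s] by auto
  qed
qed

lemma LC_upd_ge: "LC n x y \<le> LC n (x(t := a)) y + 1"
proof (cases "LC n x y = 0")
  case False
  then have "LC n x y - 1 \<in> LCS n (x(t := a)) y" using LC_in by (intro LCS_remove) auto
  then have "LC n x y - 1 \<le> LC n (x(t := a)) y" by (rule LC_ge)
  then show ?thesis by simp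
qed simp

lemma LC_lip_x: "\<bar>real (LC n (x(t := a)) y) - real (LC n x y)\<bar> \<le> 1"
proof -
  have 1: "LC n x y \<le> LC n (x(t := a)) y + 1" by (rule LC_upd_ge)
  have 2: "LC n (x(t := a)) y \<le> LC n ((x(t := a))(t := x t)) y + 1" by (rule LC_upd_ge)
  have "(x(t := a))(t := x t) = x" by simp
  with 1 2 show ?thesis by auto
qed

lemma LC_lip_y: "\<bar>real (LC n x (y(t := a))) - real (LC n x y)\<bar> \<le> 1"
  using LC_lip_x[of n y t a x] by (simp add: LC_sym[of n x])

lemma pair_as_Pi:
  fixes A :: "nat set" and p :: "'a pmf"
  assumes A: "finite A"
  shows "pair_pmf (Pi_pmf A dflt (\<lambda>_. p)) (Pi_pmf A dflt (\<lambda>_. p))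
       = map_pmf (\<lambda>h. (h \<circ> Inl, h \<circ> Inr)) (Pi_pmf (Inl ` A \<union> Inr ` A) dflt (\<lambda>_. p))"
proof -
  define QL where "QL = Pi_pmf (Inl ` A :: (nat + nat) set) dflt (\<lambda>_. p)"
  define QR where "QR = Pi_pmf (Inr ` A :: (nat + nat) set) dflt (\<lambda>_. p)"
  have PL: "Pi_pmf A dflt (\<lambda>_. p) = map_pmf (\<lambda>g. g \<circ> Inl) QL"
    unfolding QL_def using A by (intro Pi_pmf_bij_betw) (auto simp: bij_betw_def)
  have PR: "Pi_pmf A dflt (\<lambda>_. p) = map_pmf (\<lambda>g. g \<circ> Inr) QR"
    unfolding QR_def using A by (intro Pi_pmf_bij_betw) (auto simp: bij_betw_def)
  have U: "Pi_pmf (Inl ` A \<union> Inr ` A) dflt (\<lambda>_. p)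
         = map_pmf (\<lambda>(f, g) x. if x \<in> Inl ` A then f x else g x) (pair_pmf QL QR)"
    unfolding QL_def QR_def using A by (intro Pi_pmf_union) auto
  have "pair_pmf (Pi_pmf A dflt (\<lambda>_. p)) (Pi_pmf A dflt (\<lambda>_. p))
        = map_pmf (\<lambda>(f, g). (f \<circ> Inl, g \<circ> Inr)) (pair_pmf QL QR)"
    by (subst arg_cong2[where f=pair_pmf, OF PL PR]) (simp add: map_pair)
  also have "\<dots> = map_pmf (\<lambda>h. (h \<circ> Inl, h \<circ> Inr))
        (map_pmf (\<lambda>(f, g) x. if x \<in> Inl ` A then f x else g x) (pair_pmf QL QR))"
    unfolding map_pmf_comp
  proof (rule map_pmf_cong[OF refl], goal_cases)
    case (1 z)
    obtain f g where fg: "z = (f, g)" by (cases z)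
    have f: "f \<in> set_pmf QL" and g: "g \<in> set_pmf QR" using 1 fg by auto
    have fo: "f u = dflt" if "u \<notin> Inl ` A" for u
      using set_Pi_pmf_subset[of "Inl ` A" dflt "\<lambda>_. p"] f A that by (auto simp: QL_def)
    have go: "g u = dflt" if "u \<notin> Inr ` A" for u
      using set_Pi_pmf_subset[of "Inr ` A" dflt "\<lambda>_. p"] g A that by (auto simp: QR_def)
    have e1: "(\<lambda>x. if x \<in> Inl ` A then f x else g x) \<circ> Inl = f \<circ> Inl"
    proof (rule ext)
      fix x
      show "((\<lambda>x. if x \<in> Inl ` A then f x else g x) \<circ> Inl) x = (f \<circ> Inl) x"
      proof (cases "x \<in> A")
        case False
        have a: "f (Inl x) = dflt" by (rule fo) (use False in auto)
        have b: "g (Inl x) = dflt" by (rule go) auto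
        show ?thesis using a b False by auto
      qed simp
    qed
    have e2: "(\<lambda>x. if x \<in> Inl ` A then f x else g x) \<circ> Inr = g \<circ> Inr"
      by (auto simp: fun_eq_iff)
    show ?case unfolding fg by (simp only: comp_apply case_prod_conv e1 e2)
  qed
  finally show ?thesis using U by simp
qed

theorem mainTheorem4:
  fixes p :: "'a pmf" and n :: nat and r :: real
  assumes "finite (set_pmf p)"
  defines "M \<equiv> word_pair_pmf n p"
  defines "L \<equiv> (\<lambda>xy. real (LC n (fst xy) (snd xy)))"
  defines "q \<equiv> 1 - (\<Sum>a\<in>set_pmf p. (pmf p a)^2)"
  shows "(2 \<le> r \<longrightarrow>
            measure_pmf.expectation M (\<lambda>xy. \<bar>L xy - measure_pmf.expectation M L\<bar> powr r)
              \<le> (r - 1) powr r / 2 * q * (2 * real n) powr (r / 2))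
       \<and> (0 < r \<and> r \<le> 2 \<longrightarrow>
            measure_pmf.expectation M (\<lambda>xy. \<bar>L xy - measure_pmf.expectation M L\<bar> powr r)
              \<le> (q * real n) powr (r / 2))"
proof -
  note fin = assms(1)
  define A where "A = {1..n}"
  define I where "I = (Inl ` A \<union> Inr ` A :: (nat + nat) set)"
  define Q where "Q = Pi_pmf I undefined (\<lambda>_. p)"
  define F where "F h = real (LC n (h \<circ> Inl) (h \<circ> Inr))" for h :: "nat + nat \<Rightarrow> 'a"
  have finI: "finite I" by (simp add: I_def A_def)
  have cardI: "card I = 2 * n"
  proof -
    have "card I = card (Inl ` A :: (nat + nat) set) + card (Inr ` A :: (nat + nat) set)"
      unfolding I_def by (rule card_Un_disjoint) (auto simp: A_def)
    also have "\<dots> = card A + card A" by (simp add: card_image)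
    finally show ?thesis by (simp add: A_def)
  qed
  have finQ: "finite (set_pmf Q)" unfolding Q_def using finI fin by (rule fin_Pi_pmf)
  have Meq: "M = map_pmf (\<lambda>h. (h \<circ> Inl, h \<circ> Inr)) Q"
    unfolding M_def word_pair_pmf_def Q_def I_def A_def by (rule pair_as_Pi) simp
  have key: "measure_pmf.expectation M (\<lambda>xy. \<bar>L xy - measure_pmf.expectation M L\<bar> powr s)
           = measure_pmf.expectation Q (\<lambda>h. \<bar>F h - measure_pmf.expectation Q F\<bar> powr s)" for s
    unfolding Meq L_def F_def by simp
  have lipF: "lip1 I F"
    unfolding lip1_def
  proof (intro allI impI)
    fix h j a assume "j \<in> I"
    show "\<bar>F (h(j := a)) - F h\<bar> \<le> 1"
    proof (cases j)
      case (Inl t)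
      have "h(j := a) \<circ> Inl = (h \<circ> Inl)(t := a)" "h(j := a) \<circ> Inr = h \<circ> Inr"
        using Inl by (auto simp: fun_eq_iff)
      then show ?thesis unfolding F_def using LC_lip_x by simp
    next
      case (Inr t)
      have "h(j := a) \<circ> Inr = (h \<circ> Inr)(t := a)" "h(j := a) \<circ> Inl = h \<circ> Inl"
        using Inr by (auto simp: fun_eq_iff)
      then show ?thesis unfolding F_def using LC_lip_y by simp
    qed
  qed
  have gen: "measure_pmf.expectation Q (\<lambda>h. \<bar>F h - measure_pmf.expectation Q F\<bar> powr s)
             \<le> (s - 1) powr s / 2 * q * (2 * real n) powr (s / 2)" if s: "s \<ge> 2" for s
    using gen_moment[OF fin finI s lipF, of undefined] cardI
    by (simp add: Q_def q_def mult_ac)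
  show ?thesis
  proof (intro conjI impI)
    assume "2 \<le> r"
    then show "measure_pmf.expectation M (\<lambda>xy. \<bar>L xy - measure_pmf.expectation M L\<bar> powr r)
              \<le> (r - 1) powr r / 2 * q * (2 * real n) powr (r / 2)"
      unfolding key by (rule gen)
  next
    assume r: "0 < r \<and> r \<le> 2"
    define X where "X h = \<bar>F h - measure_pmf.expectation Q F\<bar>" for h
    have "measure_pmf.expectation Q (\<lambda>h. X h powr r) \<le> (measure_pmf.expectation Q (\<lambda>h. X h powr 2)) powr (r / 2)"
      using r by (intro lyapunov[OF finQ]) (auto simp: X_def)
    also have "\<dots> \<le> (q * real n) powr (r / 2)"
    proof (rule powr_mono2)
      show "0 \<le> r / 2" using r by simp
      show "0 \<le> measure_pmf.expectation Q (\<lambda>h. X h powr 2)" using finQ by (rule exp_nonneg_fin) simp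
      show "measure_pmf.expectation Q (\<lambda>h. X h powr 2) \<le> q * real n"
        using gen[of 2] by (simp add: X_def)
    qed
    finally show "measure_pmf.expectation M (\<lambda>xy. \<bar>L xy - measure_pmf.expectation M L\<bar> powr r)
              \<le> (q * real n) powr (r / 2)"
      unfolding key by (simp add: X_def)
  qed
qed


end
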